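(* Let $G$ be a Polish group, $X$ a Polish space with a continuous $G$-action, and $F\subseteq E^X_G$ a Borel equivalence relation on $X$ such that each $E^X_G$-class contains at most countably many $F$-classes. Then there is a Borel $G$-lg comeager set $C\subseteq X$ such that $G(x,C\cap[x]_F)$ is relatively open in $G(x,C)$ for every $x\in C$; equivalently, for every $x\in C$ there is an open neighbourhood $V\subseteq G$ of $1_G$ with $V\cdot x\cap C\subseteq[x]_F$.
   Context: $E^X_G=\{(x,y):\exists g\in G\ g\cdot x=y\}$; $[x]_F$ is the $F$-class of $x$. For $x\in X$, $A\subseteq X$, $G(x,A)=\{g\in G:g\cdot x\in A\}$. A set $C\subseteq X$ is $G$-lg comeager if $G\setminus G(x,C)$ is meager in $G$ for every $x\in X$. *)

theory Defs
  imports "HOL-Analysis.Analysis"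
begin

definition nowhere_dense :: "'a::topological_space set \<Rightarrow> bool" where
  "nowhere_dense A \<longleftrightarrow> interior (closure A) = {}"

definition meager :: "'a::topological_space set \<Rightarrow> bool" where
  "meager A \<longleftrightarrow> (\<exists>N::nat \<Rightarrow> 'a set. (\<forall>n. nowhere_dense (N n)) \<and> A \<subseteq> (\<Union>n. N n))"

text \<open>Continuous action of a topological group (written additively, not necessarily
  commutative, identity 0) on a space.\<close>
definition continuous_action :: "('g::topological_group_add \<Rightarrow> 'x::topological_space \<Rightarrow> 'x) \<Rightarrow> bool" where
  "continuous_action act \<longleftrightarrow>
     (\<forall>x. act 0 x = x) \<and> (\<forall>g h x. act (g + h) x = act g (act h x)) \<and>
     continuous_on UNIV (\<lambda>p. act (fst p) (snd p))"

definition orbit_rel :: "('g \<Rightarrow> 'x \<Rightarrow> 'x) \<Rightarrow> ('x \<times> 'x) set" where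
  "orbit_rel act = {(x, y). \<exists>g. act g x = y}"

definition return_set :: "('g \<Rightarrow> 'x \<Rightarrow> 'x) \<Rightarrow> 'x \<Rightarrow> 'x set \<Rightarrow> 'g set" where
  "return_set act x A = {g. act g x \<in> A}"

definition lg_comeager :: "('g::topological_space \<Rightarrow> 'x \<Rightarrow> 'x) \<Rightarrow> 'x set \<Rightarrow> bool" where
  "lg_comeager act C \<longleftrightarrow> (\<forall>x. meager (UNIV - return_set act x C))"

end

theory Submission
  imports Defs
begin

lemma meager_subset: "meager B \<Longrightarrow> A \<subseteq> B \<Longrightarrow> meager A"
  unfolding meager_def by blast

lemma nowhere_dense_meager: "nowhere_dense A \<Longrightarrow> meager A"
  unfolding meager_def by (rule exI[of _ "\<lambda>n. A"]) auto

lemma meager_empty: "meager {}"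
  by (rule nowhere_dense_meager) (simp add: nowhere_dense_def)

lemma meager_countable_Union:
  assumes "countable \<A>" "\<And>A. A \<in> \<A> \<Longrightarrow> meager A"
  shows "meager (\<Union>\<A>)"
proof (cases "\<A> = {}")
  case True then show ?thesis by (simp add: meager_empty)
next
  case False
  have "\<forall>A\<in>\<A>. \<exists>N. (\<forall>n::nat. nowhere_dense (N n)) \<and> A \<subseteq> (\<Union>n. N n)"
    using assms(2) unfolding meager_def by auto
  then have "\<exists>N. \<forall>A\<in>\<A>. (\<forall>n::nat. nowhere_dense (N A n)) \<and> A \<subseteq> (\<Union>n. N A n)"
    by (rule bchoice)
  then obtain N where NN: "\<forall>A\<in>\<A>. (\<forall>n::nat. nowhere_dense (N A n)) \<and> A \<subseteq> (\<Union>n. N A n)"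
    by (rule exE)
  have N: "\<And>A n. A \<in> \<A> \<Longrightarrow> nowhere_dense (N A n)"
    "\<And>A. A \<in> \<A> \<Longrightarrow> A \<subseteq> (\<Union>n. N A n)" using NN by auto
  define M where "M k = N (from_nat_into \<A> (fst (prod_decode k))) (snd (prod_decode k))" for k
  have "nowhere_dense (M k)" for k
    unfolding M_def by (rule N(1)) (rule from_nat_into[OF False])
  moreover have "\<Union>\<A> \<subseteq> (\<Union>k. M k)"
  proof
    fix x assume "x \<in> \<Union>\<A>"
    then obtain A where A: "A \<in> \<A>" "x \<in> A" by blast
    then obtain j where j: "x \<in> N A j" using N(2)[OF A(1)] by auto
    define k where "k = prod_encode (to_nat_on \<A> A, j)"
    have "M k = N A j"
      unfolding M_def k_def using from_nat_into_to_nat_on[OF assms(1) A(1)] by simp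
    then show "x \<in> (\<Union>k. M k)" using j by blast
  qed
  ultimately show ?thesis unfolding meager_def by (intro exI[of _ M]) simp
qed

lemma meager_UN_nat: "(\<And>n::nat. meager (A n)) \<Longrightarrow> meager (\<Union>n. A n)"
proof -
  assume a: "\<And>n::nat. meager (A n)"
  have "meager (\<Union>(range A))" by (rule meager_countable_Union) (use a in auto)
  then show ?thesis by simp
qed

lemma meager_Un: "meager A \<Longrightarrow> meager B \<Longrightarrow> meager (A \<union> B)"
  using meager_countable_Union[of "{A, B}"] by auto

lemma meager_UN_iff: "meager (\<Union>n. A n) \<longleftrightarrow> (\<forall>n::nat. meager (A n))"
proof
  assume "meager (\<Union>n. A n)"
  then show "\<forall>n. meager (A n)" using meager_subset[of "\<Union>n. A n"] by (meson UN_upper UNIV_I)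
next
  assume "\<forall>n. meager (A n)"
  then show "meager (\<Union>n. A n)" using meager_UN_nat by blast
qed

definition bp :: "'a::topological_space set \<Rightarrow> bool" where
  "bp A \<longleftrightarrow> (\<exists>U. open U \<and> meager ((A - U) \<union> (U - A)))"

lemma bp_open: "open A \<Longrightarrow> bp A"
  unfolding bp_def using meager_empty by (intro exI[of _ A]) auto

lemma frontier_open_nowhere_dense:
  assumes "open U" shows "nowhere_dense (closure U - U)"
proof -
  have cl: "closed (closure U - U)" using assms by (simp add: closed_Diff)
  have "interior (closure U - U) \<inter> U = {}" using interior_subset by blast
  then have "interior (closure U - U) \<inter> closure U = {}"
    using open_Int_closure_eq_empty[of "interior (closure U - U)" U] by simp
  then have "interior (closure U - U) = {}"
    using interior_subset[of "closure U - U"] by blast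
  then show ?thesis unfolding nowhere_dense_def using cl closure_closed by metis
qed

lemma bp_compl: assumes "bp A" shows "bp (- A)"
proof -
  obtain U where U: "open U" "meager ((A - U) \<union> (U - A))" using assms bp_def by blast
  have "(- A - (- closure U)) \<union> (- closure U - (- A)) \<subseteq> ((A - U) \<union> (U - A)) \<union> (closure U - U)"
    using closure_subset[of U] by blast
  moreover have "meager (((A - U) \<union> (U - A)) \<union> (closure U - U))"
    using U frontier_open_nowhere_dense nowhere_dense_meager meager_Un by blast
  ultimately show ?thesis unfolding bp_def
    by (intro exI[of _ "- closure U"]) (auto intro: meager_subset)
qed

lemma bp_UN: assumes "\<And>n::nat. bp (A n)" shows "bp (\<Union>n. A n)"
proof -
  obtain U where U: "\<And>n. open (U n)" "\<And>n. meager ((A n - U n) \<union> (U n - A n))"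
    using assms unfolding bp_def by metis
  have "((\<Union>n. A n) - (\<Union>n. U n)) \<union> ((\<Union>n. U n) - (\<Union>n. A n)) \<subseteq> (\<Union>n. (A n - U n) \<union> (U n - A n))"
    by blast
  moreover have "meager (\<Union>n. (A n - U n) \<union> (U n - A n))"
    using U(2) meager_UN_nat[of "\<lambda>n. (A n - U n) \<union> (U n - A n)"] by blast
  ultimately show ?thesis unfolding bp_def
    by (intro exI[of _ "\<Union>n. U n"]) (auto intro: meager_subset U)
qed

lemma baire_open:
  fixes U :: "'a::polish_space set"
  assumes "open U" "U \<noteq> {}" shows "\<not> meager U"
proof
  assume "meager U"
  then obtain N :: "nat \<Rightarrow> 'a set" where N: "\<And>n. nowhere_dense (N n)" "U \<subseteq> (\<Union>n. N n)"
    unfolding meager_def by blast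
  have "euclidean interior_of \<Union>(range (\<lambda>n. closure (N n))) = {}"
  proof (rule Baire_category_alt)
    show "completely_metrizable_space (euclidean :: 'a topology) \<or>
      locally_compact_space (euclidean :: 'a topology) \<and> regular_space (euclidean :: 'a topology)"
      using completely_metrizable_space_euclidean by blast
    show "countable (range (\<lambda>n. closure (N n)))" by simp
    show "\<And>T. T \<in> range (\<lambda>n. closure (N n)) \<Longrightarrow> closedin euclidean T \<and> euclidean interior_of T = {}"
      using N(1) unfolding nowhere_dense_def by auto
  qed
  then have "interior (\<Union>n. closure (N n)) = {}" by simp
  moreover have "U \<subseteq> (\<Union>n. closure (N n))" using N(2) closure_subset by blast
  ultimately have "U \<subseteq> {}" using interior_maximal assms(1) by blast
  then show False using assms(2) by blast
qed

lemma bp_lost: assumes "bp T" shows "meager (T - \<Union>{V. open V \<and> meager (V - T)})"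
proof -
  obtain U where U: "open U" "meager ((T - U) \<union> (U - T))" using assms bp_def by blast
  have "meager (U - T)" using U(2) meager_subset by blast
  then have "U \<subseteq> \<Union>{V. open V \<and> meager (V - T)}" using U(1) by blast
  then have "T - \<Union>{V. open V \<and> meager (V - T)} \<subseteq> (T - U) \<union> (U - T)" by blast
  then show ?thesis using U(2) meager_subset by blast
qed

lemma bp_localize:
  fixes A :: "'a::polish_space set"
  assumes B: "topological_basis \<B>" and "bp A" "open V"
  shows "\<not> meager (A \<inter> V) \<longleftrightarrow> (\<exists>W\<in>\<B>. W \<noteq> {} \<and> W \<subseteq> V \<and> meager (W - A))"
proof
  obtain U where U: "open U" "meager ((A - U) \<union> (U - A))" using assms bp_def by blast
  assume "\<not> meager (A \<inter> V)"
  moreover have "A \<inter> V \<subseteq> (U \<inter> V) \<union> ((A - U) \<union> (U - A))" by blast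
  ultimately have "\<not> meager (U \<inter> V)" using U(2) meager_Un meager_subset by blast
  then have "U \<inter> V \<noteq> {}" using meager_empty by auto
  then obtain z where z: "z \<in> U \<inter> V" by blast
  then obtain W where W: "W \<in> \<B>" "z \<in> W" "W \<subseteq> U \<inter> V"
    using topological_basisE[OF B, of "U \<inter> V" z] U(1) assms(3) by blast
  have "W - A \<subseteq> (A - U) \<union> (U - A)" using W by blast
  then show "\<exists>W\<in>\<B>. W \<noteq> {} \<and> W \<subseteq> V \<and> meager (W - A)"
    using W U(2) meager_subset by blast
next
  assume "\<exists>W\<in>\<B>. W \<noteq> {} \<and> W \<subseteq> V \<and> meager (W - A)"
  then obtain W where W: "W \<in> \<B>" "W \<noteq> {}" "W \<subseteq> V" "meager (W - A)" by blast
  have "\<not> meager W" using baire_open W topological_basis_open[OF B] by blast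
  moreover have "W \<subseteq> (W - A) \<union> (A \<inter> V)" using W by blast
  ultimately show "\<not> meager (A \<inter> V)" using W(4) meager_Un meager_subset by blast
qed

lemma section_borel:
  fixes B :: "('x::topological_space \<times> 'g::polish_space) set"
  assumes Bb: "topological_basis \<B>" "countable \<B>" and B: "B \<in> sets borel"
  shows "(\<forall>y. bp {g. (y,g) \<in> B}) \<and> (\<forall>W\<in>\<B>. {y. meager ({g. (y,g) \<in> B} \<inter> W)} \<in> sets borel)"
proof -
  have B': "B \<in> sigma_sets UNIV {S. open S}" using B by (simp add: sets_borel)
  then show ?thesis
proof (induct rule: sigma_sets.induct)
  case (Basic a)
  then have oa: "open a" by simp
  have so: "open {g. (y,g) \<in> a}" for y
  proof -
    have "{g. (y,g) \<in> a} = Pair y -` a" by auto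
    moreover have "open (Pair y -` a)" using oa by (intro open_vimage continuous_intros)
    ultimately show ?thesis by simp
  qed
  have f1: "\<forall>y. bp {g. (y, g) \<in> a}" using so bp_open by blast
  have f2: "{y. meager ({g. (y,g) \<in> a} \<inter> W)} \<in> sets borel" if W: "W \<in> \<B>" for W
  proof -
    from W have oW: "open W" using topological_basis_open[OF Bb(1)] by blast
    have "{y. meager ({g. (y,g) \<in> a} \<inter> W)} = - fst ` (a \<inter> (UNIV \<times> W))"
    proof (intro set_eqI iffI)
      fix y assume "y \<in> {y. meager ({g. (y,g) \<in> a} \<inter> W)}"
      then have "{g. (y,g) \<in> a} \<inter> W = {}"
        using baire_open[of "{g. (y,g) \<in> a} \<inter> W"] so oW by blast
      then show "y \<in> - fst ` (a \<inter> (UNIV \<times> W))" by force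
    next
      fix y assume "y \<in> - fst ` (a \<inter> (UNIV \<times> W))"
      then have "{g. (y,g) \<in> a} \<inter> W = {}" by force
      then show "y \<in> {y. meager ({g. (y,g) \<in> a} \<inter> W)}" using meager_empty by simp
    qed
    moreover have "open (fst ` (a \<inter> (UNIV \<times> W)))"
      using oa oW by (intro open_image_fst open_Int open_Times) auto
    ultimately show "{y. meager ({g. (y,g) \<in> a} \<inter> W)} \<in> sets borel"
      by (simp add: borel_comp borel_open)
  qed
  show ?case using f1 f2 by blast
next
  case Empty
  show ?case using bp_open[of "{}"] meager_empty by simp
next
  case (Compl a)
  have e1: "{g. (y,g) \<in> UNIV - a} = - {g. (y,g) \<in> a}" for y by auto
  show ?case
  proof (intro conjI allI ballI)
    fix y show "bp {g. (y, g) \<in> UNIV - a}" unfolding e1 using Compl(2) bp_compl by blast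
  next
    fix W assume W: "W \<in> \<B>"
    then have oW: "open W" using topological_basis_open[OF Bb(1)] by blast
    have eqc: "{y. meager ({g. (y,g) \<in> UNIV - a} \<inter> W)} =
      - (\<Union>W'\<in>{W'\<in>\<B>. W' \<noteq> {} \<and> W' \<subseteq> W}. {y. meager ({g. (y,g) \<in> a} \<inter> W')})"
    proof (intro set_eqI)
      fix y
      have bpy: "bp (- {g. (y,g) \<in> a})" using Compl(2) bp_compl by blast
      have "(\<not> meager (- {g. (y,g) \<in> a} \<inter> W)) \<longleftrightarrow>
         (\<exists>W'\<in>\<B>. W' \<noteq> {} \<and> W' \<subseteq> W \<and> meager (W' - - {g. (y,g) \<in> a}))"
        by (rule bp_localize[OF Bb(1) bpy oW])
      moreover have "W' - - {g. (y,g) \<in> a} = {g. (y,g) \<in> a} \<inter> W'" for W' by blast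
      ultimately show "y \<in> {y. meager ({g. (y,g) \<in> UNIV - a} \<inter> W)} \<longleftrightarrow>
        y \<in> - (\<Union>W'\<in>{W'\<in>\<B>. W' \<noteq> {} \<and> W' \<subseteq> W}. {y. meager ({g. (y,g) \<in> a} \<inter> W')})"
        unfolding e1 by auto
    qed
    have memc: "(\<Union>W'\<in>{W'\<in>\<B>. W' \<noteq> {} \<and> W' \<subseteq> W}. {y. meager ({g. (y,g) \<in> a} \<inter> W')}) \<in> sets borel"
      using Compl(2) Bb(2) by (intro sets.countable_UN'') auto
    show "{y. meager ({g. (y,g) \<in> UNIV - a} \<inter> W)} \<in> sets borel"
      unfolding eqc by (rule borel_comp[OF memc])
  qed
next
  case (Union a)
  have e1: "{g. (y,g) \<in> (\<Union>i. a i)} = (\<Union>i. {g. (y,g) \<in> a i})" for y by auto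
  show ?case
  proof (intro conjI allI ballI)
    fix y show "bp {g. (y, g) \<in> (\<Union>i. a i)}" unfolding e1 using Union(2) by (intro bp_UN) blast
  next
    fix W assume W: "W \<in> \<B>"
    have "{y. meager ({g. (y,g) \<in> (\<Union>i. a i)} \<inter> W)} = (\<Inter>i. {y. meager ({g. (y,g) \<in> a i} \<inter> W)})"
    proof (intro set_eqI)
      fix y
      have "{g. (y,g) \<in> (\<Union>i. a i)} \<inter> W = (\<Union>i. {g. (y,g) \<in> a i} \<inter> W)" by auto
      then show "y \<in> {y. meager ({g. (y,g) \<in> (\<Union>i. a i)} \<inter> W)} \<longleftrightarrow> y \<in> (\<Inter>i. {y. meager ({g. (y,g) \<in> a i} \<inter> W)})"
        using meager_UN_iff[of "\<lambda>i. {g. (y,g) \<in> a i} \<inter> W"] by simp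
    qed
    moreover have "(\<Inter>i. {y. meager ({g. (y,g) \<in> a i} \<inter> W)}) \<in> sets borel"
      using Union(2) W by (intro sets.countable_INT'') auto
    ultimately show "{y. meager ({g. (y,g) \<in> (\<Union>i. a i)} \<inter> W)} \<in> sets borel" by simp
  qed
qed
qed

lemma nowhere_dense_translate:
  fixes A :: "'g::topological_group_add set"
  assumes "nowhere_dense A" shows "nowhere_dense ((\<lambda>k. k + c) -` A)"
proof -
  let ?f = "\<lambda>k::'g. k + c"
  define W where "W = interior (closure (?f -` A))"
  have cf: "continuous_on UNIV ?f" by (intro continuous_intros)
  have "closed (?f -` closure A \<inter> UNIV)"
    by (rule closed_vimage_Int) (auto intro: cf)
  then have "closed (?f -` closure A)" by simp
  then have "closure (?f -` A) \<subseteq> ?f -` closure A"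
    by (intro closure_minimal) (use closure_subset in auto)
  then have Wsub: "W \<subseteq> ?f -` closure A" unfolding W_def using interior_subset by blast
  have img: "?f ` W = (\<lambda>k. k - c) -` W"
  proof (intro set_eqI iffI)
    fix k assume "k \<in> ?f ` W" then show "k \<in> (\<lambda>k. k - c) -` W" by auto
  next
    fix k assume "k \<in> (\<lambda>k. k - c) -` W"
    then have "k - c \<in> W" by simp
    moreover have "k = (k - c) + c" by simp
    ultimately show "k \<in> ?f ` W" by (metis image_eqI)
  qed
  have "open ((\<lambda>k. k - c) -` W)"
    unfolding W_def by (intro open_vimage open_interior) (auto intro!: continuous_intros)
  then have "open (?f ` W)" using img by simp
  moreover have "?f ` W \<subseteq> closure A" using Wsub by auto
  ultimately have "?f ` W \<subseteq> interior (closure A)" using interior_maximal by blast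
  then have "W = {}" using assms unfolding nowhere_dense_def by blast
  then show ?thesis unfolding nowhere_dense_def W_def .
qed

lemma meager_translate:
  fixes A :: "'g::topological_group_add set"
  assumes "meager A" shows "meager ((\<lambda>k. k + c) -` A)"
proof -
  obtain N :: "nat \<Rightarrow> 'g set" where N: "\<And>n. nowhere_dense (N n)" "A \<subseteq> (\<Union>n. N n)"
    using assms unfolding meager_def by blast
  have "(\<lambda>k. k + c) -` A \<subseteq> (\<Union>n. (\<lambda>k. k + c) -` N n)" using N(2) by blast
  then show ?thesis unfolding meager_def
    by (intro exI[of _ "\<lambda>n. (\<lambda>k. k + c) -` N n"]) (simp add: N(1) nowhere_dense_translate)
qed

lemma cont_borel_vimage:
  fixes f :: "'a::topological_space \<Rightarrow> 'b::topological_space"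
  assumes "continuous_on UNIV f" "F \<in> sets borel" shows "f -` F \<in> sets borel"
proof -
  have "f \<in> borel_measurable borel" using assms(1) by (rule borel_measurable_continuous_onI)
  from measurable_sets[OF this assms(2)] show ?thesis by simp
qed

theorem mainTheorem8:
  fixes act :: "'g::{topological_group_add, polish_space} \<Rightarrow> 'x::polish_space \<Rightarrow> 'x"
    and F :: "('x \<times> 'x) set"
  assumes "continuous_action act"
    and "equiv UNIV F"
    and "F \<in> sets borel"
    and "F \<subseteq> orbit_rel act"
    and "\<forall>x. countable {F `` {y} | y. (x, y) \<in> orbit_rel act}"
  shows "\<exists>C. C \<in> sets borel \<and> lg_comeager act C \<and>
           (\<forall>x\<in>C. openin (top_of_set (return_set act x C))
                              (return_set act x (C \<inter> F `` {x})))"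
proof -
  have act0: "\<And>x. act 0 x = x" and actadd: "\<And>g h x. act (g + h) x = act g (act h x)"
    and cont: "continuous_on UNIV (\<lambda>p. act (fst p) (snd p))"
    using assms(1) unfolding continuous_action_def by auto
  have Frefl: "\<And>z. (z,z) \<in> F" using assms(2) by (meson UNIV_I equivE refl_onD)
  have Fsym: "\<And>a b. (a,b) \<in> F \<Longrightarrow> (b,a) \<in> F" using assms(2) by (meson equivE symD)
  have Ftrans: "\<And>a b c. (a,b) \<in> F \<Longrightarrow> (b,c) \<in> F \<Longrightarrow> (a,c) \<in> F"
    using assms(2) by (meson equivE transD)
  obtain \<B> :: "'g set set" where Bb: "countable \<B>" "topological_basis \<B>"
    using ex_countable_basis by blast
  have Bopen: "\<And>W. W \<in> \<B> \<Longrightarrow> open W" using topological_basis_open[OF Bb(2)] by blast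
  have cont_orb: "continuous_on UNIV (\<lambda>g. act g x)" for x
  proof -
    have "continuous_on UNIV (\<lambda>g::'g. (g, x))" by (intro continuous_intros)
    from continuous_on_compose2[OF cont this] show ?thesis by simp
  qed
  define B :: "('x \<times> 'g) set" where "B = (\<lambda>p. (fst p, act (snd p) (fst p))) -` F"
  have Bbor: "B \<in> sets borel"
    unfolding B_def
  proof (rule cont_borel_vimage[OF _ assms(3)])
    have "continuous_on UNIV (\<lambda>p::'x\<times>'g. (snd p, fst p))" by (intro continuous_intros)
    from continuous_on_compose2[OF cont this]
    have "continuous_on UNIV (\<lambda>p::'x\<times>'g. act (snd p) (fst p))" by simp
    then show "continuous_on UNIV (\<lambda>p::'x\<times>'g. (fst p, act (snd p) (fst p)))"
      by (auto intro!: continuous_intros)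
  qed
  have Bcbor: "- B \<in> sets borel" using Bbor by (rule borel_comp)
  have SB: "\<forall>W\<in>\<B>. {y. meager ({g. (y,g) \<in> - B} \<inter> W)} \<in> sets borel"
    using section_borel[OF Bb(2) Bb(1) Bcbor] by blast
  define C where "C = {y. \<exists>W\<in>\<B>. 0 \<in> W \<and> meager (W - {h. (y, act h y) \<in> F})}"
  have Cbor: "C \<in> sets borel"
  proof -
    have e: "{g. (y,g) \<in> - B} \<inter> W = W - {h. (y, act h y) \<in> F}" for y W
      unfolding B_def by auto
    have "C = (\<Union>W\<in>{W\<in>\<B>. 0 \<in> W}. {y. meager ({g. (y,g) \<in> - B} \<inter> W)})"
      unfolding C_def e by auto
    moreover have "(\<Union>W\<in>{W\<in>\<B>. 0 \<in> W}. {y. meager ({g. (y,g) \<in> - B} \<inter> W)}) \<in> sets borel"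
      using SB Bb(1) by (intro sets.countable_UN'') auto
    ultimately show ?thesis by simp
  qed
  have h1: "act (k - g) (act g x) = act k x" for k g x
    by (simp add: actadd[symmetric])
  have key: "act g x \<in> C \<longleftrightarrow> (\<exists>W\<in>\<B>. 0 \<in> W \<and> meager ({k. k - g \<in> W} - {k. (act g x, act k x) \<in> F}))"
    for g x
  proof -
    have e1: "{k. k - g \<in> W} - {k. (act g x, act k x) \<in> F} =
       (\<lambda>k. k + - g) -` (W - {h. (act g x, act h (act g x)) \<in> F})" for W
      by (auto simp: h1)
    have e2: "W - {h. (act g x, act h (act g x)) \<in> F} =
       (\<lambda>k. k + g) -` ({k. k - g \<in> W} - {k. (act g x, act k x) \<in> F})" for W
      by (auto simp: actadd)
    have "meager (W - {h. (act g x, act h (act g x)) \<in> F}) \<longleftrightarrow>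
          meager ({k. k - g \<in> W} - {k. (act g x, act k x) \<in> F})" for W
    proof
      assume "meager (W - {h. (act g x, act h (act g x)) \<in> F})"
      from meager_translate[OF this, of "- g"] show "meager ({k. k - g \<in> W} - {k. (act g x, act k x) \<in> F})"
        unfolding e1 .
    next
      assume "meager ({k. k - g \<in> W} - {k. (act g x, act k x) \<in> F})"
      from meager_translate[OF this, of g] show "meager (W - {h. (act g x, act h (act g x)) \<in> F})"
        unfolding e2 .
    qed
    then show ?thesis unfolding C_def by auto
  qed
  define S where "S x g = {k. (act g x, act k x) \<in> F}" for x g
  have Sin: "g \<in> S x g" for x g unfolding S_def using Frefl by simp
  have Sdisj: "S x g \<inter> S x g' = {}" if "(act g x, act g' x) \<notin> F" for x g g'
    using that Fsym Ftrans unfolding S_def by blast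
  have Seq: "S x g = S x g'" if "(act g x, act g' x) \<in> F" for x g g'
    using that Fsym Ftrans unfolding S_def by blast
  have Dchar: "g \<in> return_set act x C \<longleftrightarrow> (\<exists>W\<in>\<B>. 0 \<in> W \<and> meager ({k. k - g \<in> W} - S x g))" for g x
    unfolding return_set_def S_def using key by simp
  have tr_open: "open {k. k - g \<in> W}" if "open W" for W and g :: 'g
  proof -
    have "open ((\<lambda>k. k - g) -` W)" using that by (intro open_vimage) (auto intro!: continuous_intros)
    then show ?thesis by (simp add: vimage_def)
  qed
  have S0: "S x 0 = {k. (x, act k x) \<in> F}" for x unfolding S_def by (simp add: act0)
  have part3: "openin (top_of_set (return_set act x C)) (return_set act x (C \<inter> F `` {x}))" for x
  proof -
    let ?D = "return_set act x C"
    let ?T = "\<Union>{V. open V \<and> meager (V - S x 0)}"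
    have eqD: "return_set act x (C \<inter> F `` {x}) = ?D \<inter> S x 0"
      unfolding return_set_def S0 by auto
    have "?D \<inter> S x 0 = ?D \<inter> ?T"
    proof (intro equalityI subsetI)
      fix g assume g: "g \<in> ?D \<inter> S x 0"
      then obtain W where W: "W \<in> \<B>" "0 \<in> W" "meager ({k. k - g \<in> W} - S x g)"
        using Dchar by blast
      have "S x 0 = S x g" using g Seq unfolding S_def by blast
      then have "open {k. k - g \<in> W} \<and> meager ({k. k - g \<in> W} - S x 0)"
        using W tr_open Bopen by simp
      moreover have "g \<in> {k. k - g \<in> W}" using W by simp
      ultimately show "g \<in> ?D \<inter> ?T" using g by blast
    next
      fix g assume g: "g \<in> ?D \<inter> ?T"
      then obtain V where V: "open V" "meager (V - S x 0)" "g \<in> V" by blast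
      obtain W where W: "W \<in> \<B>" "0 \<in> W" "meager ({k. k - g \<in> W} - S x g)"
        using g Dchar by blast
      show "g \<in> ?D \<inter> S x 0"
      proof (rule ccontr)
        assume "g \<notin> ?D \<inter> S x 0"
        then have "g \<notin> S x 0" using g by blast
        then have "(act 0 x, act g x) \<notin> F" unfolding S_def by simp
        then have dj: "S x 0 \<inter> S x g = {}" by (rule Sdisj)
        let ?O = "V \<inter> {k. k - g \<in> W}"
        have "open ?O" using V(1) tr_open Bopen W(1) by blast
        moreover have "g \<in> ?O" using V(3) W(2) by simp
        ultimately have "\<not> meager ?O" using baire_open by blast
        moreover have "?O \<subseteq> (V - S x 0) \<union> ({k. k - g \<in> W} - S x g) \<union> (S x 0 \<inter> S x g)" by blast
        moreover have "meager ((V - S x 0) \<union> ({k. k - g \<in> W} - S x g) \<union> (S x 0 \<inter> S x g))"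
          using V(2) W(3) dj meager_Un meager_empty by simp
        ultimately show False using meager_subset by blast
      qed
    qed
    then show ?thesis unfolding eqD openin_open by (intro exI[of _ ?T]) auto
  qed
  have part2: "meager (UNIV - return_set act x C)" for x
  proof -
    let ?D = "return_set act x C"
    define U :: "'g set \<Rightarrow> 'g set" where "U T = \<Union>{V. open V \<and> meager (V - T)}" for T
    have cnt: "countable (range (S x))"
    proof -
      have "range (S x) \<subseteq> (\<lambda>Q. {k. act k x \<in> Q}) ` {F``{y} | y. (x,y) \<in> orbit_rel act}"
      proof
        fix T assume "T \<in> range (S x)"
        then obtain g where T: "T = S x g" by blast
        have "T = (\<lambda>Q. {k. act k x \<in> Q}) (F``{act g x})" unfolding T S_def by auto
        moreover have "(x, act g x) \<in> orbit_rel act" unfolding orbit_rel_def by auto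
        ultimately show "T \<in> (\<lambda>Q. {k. act k x \<in> Q}) ` {F``{y} | y. (x,y) \<in> orbit_rel act}" by blast
      qed
      then show ?thesis
        using countable_subset[OF _ countable_image[OF assms(5)[rule_format, of x]]] by blast
    qed
    have bpS: "bp (S x g)" for g
    proof -
      define B2 :: "('x \<times> 'g) set" where "B2 = (\<lambda>p. (act g x, act (snd p) x)) -` F"
      have "B2 \<in> sets borel" unfolding B2_def
      proof (rule cont_borel_vimage[OF _ assms(3)])
        have "continuous_on UNIV (\<lambda>p::'x\<times>'g. snd p)" by (intro continuous_intros)
        from continuous_on_compose2[OF cont_orb this]
        have "continuous_on UNIV (\<lambda>p::'x\<times>'g. act (snd p) x)" by simp
        then show "continuous_on UNIV (\<lambda>p::'x\<times>'g. (act g x, act (snd p) x))"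
          by (intro continuous_intros)
      qed
      from section_borel[OF Bb(2) Bb(1) this] have "bp {k. (undefined, k) \<in> B2}" by blast
      moreover have "{k. (undefined::'x, k) \<in> B2} = S x g" unfolding B2_def S_def by auto
      ultimately show ?thesis by simp
    qed
    have lost: "meager (S x g - U (S x g))" for g unfolding U_def by (rule bp_lost[OF bpS])
    have sub: "UNIV - ?D \<subseteq> \<Union>((\<lambda>T. T - U T) ` range (S x))"
    proof
      fix g assume "g \<in> UNIV - ?D"
      then have nD: "g \<notin> ?D" by blast
      have "g \<notin> U (S x g)"
      proof
        assume "g \<in> U (S x g)"
        then obtain V where V: "open V" "meager (V - S x g)" "g \<in> V" unfolding U_def by blast
        have "open ((\<lambda>h. h + g) -` V)" using V(1) by (intro open_vimage) (auto intro!: continuous_intros)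
        moreover have "0 \<in> (\<lambda>h. h + g) -` V" using V(3) by simp
        ultimately obtain W where W: "W \<in> \<B>" "0 \<in> W" "W \<subseteq> (\<lambda>h. h + g) -` V"
          using topological_basisE[OF Bb(2)] by metis
        have "{k. k - g \<in> W} \<subseteq> V" using W(3) by auto
        then have "meager ({k. k - g \<in> W} - S x g)" by (intro meager_subset[OF V(2)]) blast
        then have "g \<in> ?D" using Dchar W(1,2) by blast
        then show False using nD by blast
      qed
      then have "g \<in> S x g - U (S x g)" using Sin by blast
      then show "g \<in> \<Union>((\<lambda>T. T - U T) ` range (S x))" by blast
    qed
    have "meager (\<Union>((\<lambda>T. T - U T) ` range (S x)))"
    proof (rule meager_countable_Union)
      show "countable ((\<lambda>T. T - U T) ` range (S x))" using cnt by simp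
    next
      fix A assume "A \<in> (\<lambda>T. T - U T) ` range (S x)"
      then obtain g where "A = S x g - U (S x g)" by blast
      then show "meager A" using lost by simp
    qed
    then show ?thesis using sub meager_subset by blast
  qed
  show ?thesis
  proof (intro exI[of _ C] conjI ballI)
    show "C \<in> sets borel" by (rule Cbor)
  next
    show "lg_comeager act C" unfolding lg_comeager_def using part2 by blast
  next
    fix x assume "x \<in> C"
    show "openin (top_of_set (return_set act x C)) (return_set act x (C \<inter> F `` {x}))"
      by (rule part3)
  qed
qed

end
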